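(* Let $\mathcal{X}\subseteq\mathbb{L}^0_+$, and for $n\in\mathbb{N}$ let $\mathcal{O}_n:=\{Y\in\mathbb{L}^0_+ : Y\le Z\text{ for some }Z\in\mathrm{conv}\{(X-n)_+ : X\in\mathcal{X}\}\}$ and $u_n(\mu):=\sup_{X\in\mathcal{O}_n}\int X\,\mathrm{d}\mu$ for $\mu\in\mathcal{M}^0_+$. If $\bigcap_{n\in\mathbb{N}}\mathcal{O}_n=\{0\}$, then there exists $\mu_0\in\mathcal{M}^0_+$ equivalent to $\mathbb{P}$ such that $u_n(\mu_0)\le 1$ for all $n\in\mathbb{N}$.
   Context: $(\Omega,\mathcal{F},\mathbb{P})$ is a probability space; $\mathbb{L}^0_+$ is the set of (equivalence classes modulo null sets of) nonnegative real-valued random variables; $\mathrm{conv}$ is the convex hull; $x_+=\max\{x,0\}$. $\mathcal{M}^0_+$ is the set of all $\sigma$-finite nonnegative measures on $(\Omega,\mathcal{F})$ absolutely continuous with respect to $\mathbb{P}$. *)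

theory Defs
  imports "HOL-Probability.Probability"
begin

text \<open>Nonnegative real-valued random variables (representatives of classes in L^0_+).\<close>
definition L0plus :: "'a measure \<Rightarrow> ('a \<Rightarrow> real) set" where
  "L0plus M = {f \<in> borel_measurable M. \<forall>x\<in>space M. 0 \<le> f x}"

definition conv_shift :: "('a \<Rightarrow> real) set \<Rightarrow> nat \<Rightarrow> ('a \<Rightarrow> real) set" where
  "conv_shift XX n = {Z. \<exists>(k::nat) (c::nat \<Rightarrow> real) (X::nat \<Rightarrow> 'a \<Rightarrow> real).
      0 < k \<and> (\<forall>i<k. 0 \<le> c i \<and> X i \<in> XX) \<and> (\<Sum>i<k. c i) = 1 \<and>
      Z = (\<lambda>\<omega>. \<Sum>i<k. c i * max (X i \<omega> - real n) 0)}"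

definition O_set :: "'a measure \<Rightarrow> ('a \<Rightarrow> real) set \<Rightarrow> nat \<Rightarrow> ('a \<Rightarrow> real) set" where
  "O_set M XX n = {Y \<in> L0plus M. \<exists>Z\<in>conv_shift XX n. AE \<omega> in M. Y \<omega> \<le> Z \<omega>}"

definition u_fun :: "'a measure \<Rightarrow> ('a \<Rightarrow> real) set \<Rightarrow> nat \<Rightarrow> 'a measure \<Rightarrow> ennreal" where
  "u_fun M XX n \<mu> = (SUP Y\<in>O_set M XX n. \<integral>\<^sup>+ \<omega>. ennreal (Y \<omega>) \<partial>\<mu>)"

definition M0plus :: "'a measure \<Rightarrow> 'a measure set" where
  "M0plus M = {\<mu>. sets \<mu> = sets M \<and> sigma_finite_measure \<mu> \<and> absolutely_continuous M \<mu>}"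

end

theory Submission
  imports Defs
begin


lemma conv_shiftE:
  assumes "Z \<in> conv_shift XX n"
  obtains k :: nat and c :: "nat \<Rightarrow> real" and X :: "nat \<Rightarrow> 'a \<Rightarrow> real" where
    "0 < k" "\<forall>i<k. 0 \<le> c i \<and> X i \<in> XX" "(\<Sum>i<k. c i) = 1"
    "Z = (\<lambda>w. \<Sum>i<k. c i * max (X i w - real n) 0)"
proof -
  from assms have "\<exists>(k::nat) (c::nat\<Rightarrow>real) (X::nat\<Rightarrow>'a\<Rightarrow>real). 0 < k \<and> (\<forall>i<k. 0 \<le> c i \<and> X i \<in> XX) \<and> (\<Sum>i<k. c i) = 1 \<and>
      Z = (\<lambda>w. \<Sum>i<k. c i * max (X i w - real n) 0)" unfolding conv_shift_def by simp
  then show thesis using that by blast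
qed

lemma conv_shift_nonneg:
  assumes "Z \<in> conv_shift XX n" shows "0 \<le> Z w"
proof -
  obtain k :: nat and c :: "nat \<Rightarrow> real" and X :: "nat \<Rightarrow> 'a \<Rightarrow> real" where
    h: "0 < k" "\<forall>i<k. 0 \<le> c i \<and> X i \<in> XX" "(\<Sum>i<k. c i) = 1" "Z = (\<lambda>w. \<Sum>i<k. c i * max (X i w - real n) 0)"
    by (rule conv_shiftE[OF assms])
  show ?thesis unfolding h(4) using h(2) by (auto intro!: sum_nonneg)
qed

lemma conv_shift_single:
  assumes "X \<in> XX" shows "(\<lambda>w. max (X w - real n) 0) \<in> conv_shift XX n"
proof -
  have "(\<lambda>w. max (X w - real n) 0) = (\<lambda>w. \<Sum>i<(1::nat). (\<lambda>_. 1::real) i * max ((\<lambda>_. X) i w - real n) 0)"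
    by simp
  moreover have "(\<Sum>i<(1::nat). (\<lambda>_. 1::real) i) = 1" by simp
  moreover have "\<forall>i<(1::nat). 0 \<le> (\<lambda>_. 1::real) i \<and> (\<lambda>_. X) i \<in> XX" using assms by simp
  ultimately show ?thesis unfolding conv_shift_def mem_Collect_eq
    by (intro exI[of _ "1::nat"] exI[of _ "\<lambda>_. 1::real"] exI[of _ "\<lambda>_::nat. X"] conjI) auto
qed

lemma conv_shift_measurable:
  assumes "XX \<subseteq> L0plus M" "Z \<in> conv_shift XX n" shows "Z \<in> borel_measurable M"
  using assms(2)
proof (elim conv_shiftE)
  fix k :: nat and c :: "nat \<Rightarrow> real" and X :: "nat \<Rightarrow> 'a \<Rightarrow> real" assume h: "0 < k" "\<forall>i<k. 0 \<le> c i \<and> X i \<in> XX"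
    "Z = (\<lambda>w. \<Sum>i<k. c i * max (X i w - real n) 0)"
  have "\<And>i. i < k \<Longrightarrow> X i \<in> borel_measurable M" using h(2) assms(1) unfolding L0plus_def by auto
  then show ?thesis unfolding h(3) by (intro borel_measurable_sum) auto
qed

lemma conv_shift_bound:
  assumes "XX \<subseteq> L0plus M" "Z \<in> conv_shift XX n"
  shows "\<exists>(k::nat) (c::nat\<Rightarrow>real) X. (\<forall>i<k. 0 \<le> c i \<and> X i \<in> XX) \<and> (\<Sum>i<k. c i) = 1 \<and>
     (\<forall>w\<in>space M. Z w \<le> (\<Sum>i<k. c i * X i w))"
  using assms(2)
proof (elim conv_shiftE)
  fix k :: nat and c :: "nat \<Rightarrow> real" and X :: "nat \<Rightarrow> 'a \<Rightarrow> real" assume h: "0 < k" "\<forall>i<k. 0 \<le> c i \<and> X i \<in> XX" "(\<Sum>i<k. c i) = 1"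
    "Z = (\<lambda>w. \<Sum>i<k. c i * max (X i w - real n) 0)"
  have "\<forall>w\<in>space M. Z w \<le> (\<Sum>i<k. c i * X i w)"
  proof
    fix w assume w: "w \<in> space M"
    show "Z w \<le> (\<Sum>i<k. c i * X i w)" unfolding h(4)
    proof (rule sum_mono)
      fix i assume "i \<in> {..<k}"
      then have "0 \<le> c i" "0 \<le> X i w" using h(2) assms(1) w unfolding L0plus_def by auto
      then show "c i * max (X i w - real n) 0 \<le> c i * X i w"
        by (intro mult_left_mono) auto
    qed
  qed
  with h show ?thesis by (intro exI[of _ k] exI[of _ c] exI[of _ X]) simp
qed

lemma sum_split_nat: "(\<Sum>i<k1+k2. g i) = (\<Sum>i<k1. g i) + (\<Sum>i<k2. g (i + k1))"
  for g :: "nat \<Rightarrow> 'b::comm_monoid_add"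
proof -
  have "(\<Sum>i<k1+k2. g i) = (\<Sum>i\<in>{0..<k1}. g i) + (\<Sum>i\<in>{k1..<k1+k2}. g i)"
    by (simp add: lessThan_atLeast0 sum.atLeastLessThan_concat)
  also have "(\<Sum>i\<in>{k1..<k1+k2}. g i) = (\<Sum>i\<in>{0..<k2}. g (i + k1))"
    using sum.shift_bounds_nat_ivl[of g 0 k1 k2] by (simp add: add.commute)
  finally show ?thesis by (simp add: lessThan_atLeast0)
qed

lemma conv_shift_convex:
  assumes "Z1 \<in> conv_shift XX n" "Z2 \<in> conv_shift XX n" "0 \<le> t" "t \<le> 1"
  shows "(\<lambda>w. t * Z1 w + (1 - t) * Z2 w) \<in> conv_shift XX n"
  using assms(1)
proof (elim conv_shiftE)
  fix k1 :: nat and c1 :: "nat \<Rightarrow> real" and X1 :: "nat \<Rightarrow> 'a \<Rightarrow> real" assume h1: "0 < k1" "\<forall>i<k1. 0 \<le> c1 i \<and> X1 i \<in> XX" "(\<Sum>i<k1. c1 i) = 1"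
    "Z1 = (\<lambda>w. \<Sum>i<k1. c1 i * max (X1 i w - real n) 0)"
  from assms(2) show ?thesis
  proof (elim conv_shiftE)
  fix k2 :: nat and c2 :: "nat \<Rightarrow> real" and X2 :: "nat \<Rightarrow> 'a \<Rightarrow> real" assume h2: "0 < k2" "\<forall>i<k2. 0 \<le> c2 i \<and> X2 i \<in> XX" "(\<Sum>i<k2. c2 i) = 1"
    "Z2 = (\<lambda>w. \<Sum>i<k2. c2 i * max (X2 i w - real n) 0)"
  define c where "c i = (if i < k1 then t * c1 i else (1 - t) * c2 (i - k1))" for i
  define X where "X i = (if i < k1 then X1 i else X2 (i - k1))" for i
  have s1: "(\<Sum>i<k1+k2. c i) = 1"
    unfolding sum_split_nat c_def using h1(3) h2(3)
    by (simp add: sum_distrib_left[symmetric])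
  have s2: "(\<lambda>w. t * Z1 w + (1 - t) * Z2 w) = (\<lambda>w. \<Sum>i<k1+k2. c i * max (X i w - real n) 0)"
    unfolding sum_split_nat h1(4) h2(4) c_def X_def
    by (simp add: sum_distrib_left mult.assoc)
  show ?thesis unfolding conv_shift_def mem_Collect_eq
    apply (rule exI[of _ "k1+k2"], rule exI[of _ c], rule exI[of _ X])
    using h1(1,2) h2(2) assms(3,4) s1 s2 by (auto simp: c_def X_def)
  qed
qed



lemma O_setI:
  assumes "Y \<in> L0plus M" "Z \<in> conv_shift XX n" "AE w in M. Y w \<le> Z w"
  shows "Y \<in> O_set M XX n"
  using assms unfolding O_set_def by (intro CollectI conjI bexI)

lemma O_set_L0: "Y \<in> O_set M XX n \<Longrightarrow> Y \<in> L0plus M"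
  unfolding O_set_def by auto

lemma O_set_meas: "Y \<in> O_set M XX n \<Longrightarrow> Y \<in> borel_measurable M"
  unfolding O_set_def L0plus_def by auto

lemma O_set_nonneg: "Y \<in> O_set M XX n \<Longrightarrow> w \<in> space M \<Longrightarrow> 0 \<le> Y w"
  unfolding O_set_def L0plus_def by auto

lemma O_set_solid:
  assumes "Y \<in> O_set M XX n" "W \<in> borel_measurable M" "\<And>w. w \<in> space M \<Longrightarrow> 0 \<le> W w \<and> W w \<le> Y w"
  shows "W \<in> O_set M XX n"
proof -
  from assms(1) obtain Z where Z: "Z \<in> conv_shift XX n" "AE w in M. Y w \<le> Z w"
    unfolding O_set_def by auto
  have "AE w in M. W w \<le> Z w" using Z(2) AE_space by eventually_elim (use assms(3) in force)
  moreover have "W \<in> L0plus M" using assms(2,3) unfolding L0plus_def by auto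
  ultimately show ?thesis using Z(1) by (intro O_setI) 
qed

lemma O_set_convex:
  assumes "Y1 \<in> O_set M XX n" "Y2 \<in> O_set M XX n" "0 \<le> t" "t \<le> 1"
  shows "(\<lambda>w. t * Y1 w + (1 - t) * Y2 w) \<in> O_set M XX n"
proof -
  from assms(1) obtain Z1 where Z1: "Z1 \<in> conv_shift XX n" "AE w in M. Y1 w \<le> Z1 w"
    unfolding O_set_def by auto
  from assms(2) obtain Z2 where Z2: "Z2 \<in> conv_shift XX n" "AE w in M. Y2 w \<le> Z2 w"
    unfolding O_set_def by auto
  have "AE w in M. t * Y1 w + (1 - t) * Y2 w \<le> t * Z1 w + (1 - t) * Z2 w"
    using Z1(2) Z2(2) proof eventually_elim
    case (elim w) then show ?case using assms(3,4)
      by (intro add_mono mult_left_mono) auto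
  qed
  moreover have "(\<lambda>w. t * Y1 w + (1 - t) * Y2 w) \<in> L0plus M"
    using assms O_set_L0[OF assms(1)] O_set_L0[OF assms(2)] unfolding L0plus_def by auto
  ultimately show ?thesis by (intro O_setI[OF _ conv_shift_convex[OF Z1(1) Z2(1) assms(3,4)]])
qed

lemma O_set_zero:
  assumes "X \<in> XX" shows "(\<lambda>_. 0) \<in> O_set M XX n"
proof -
  have "(\<lambda>_. 0) \<in> L0plus M" unfolding L0plus_def by auto
  moreover have "AE w in M. (0::real) \<le> max (X w - real n) 0" by auto
  ultimately show ?thesis by (intro O_setI[OF _ conv_shift_single[OF assms, of n]])
qed

lemma O_set_single:
  assumes "X \<in> XX" "X \<in> borel_measurable M" "0 \<le> m"
  shows "(\<lambda>w. min (max (X w - real n) 0) m) \<in> O_set M XX n"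
proof -
  have "(\<lambda>w. min (max (X w - real n) 0) m) \<in> L0plus M" using assms unfolding L0plus_def by auto
  moreover have "AE w in M. min (max (X w - real n) 0) m \<le> max (X w - real n) 0" by auto
  ultimately show ?thesis by (intro O_setI[OF _ conv_shift_single[OF assms(1), of n]])
qed

context prob_space begin

lemma intb:
  fixes f :: "'a \<Rightarrow> real"
  assumes "f \<in> borel_measurable M" "\<And>w. w \<in> space M \<Longrightarrow> \<bar>f w\<bar> \<le> B"
  shows "integrable M f"
  using assms by (intro integrable_const_bound[where B=B]) auto

lemma exp_quad:
  fixes f g :: "'a \<Rightarrow> real"
  assumes "f \<in> borel_measurable M" "g \<in> borel_measurable M"
    "\<And>w. w \<in> space M \<Longrightarrow> \<bar>f w\<bar> \<le> B" "\<And>w. w \<in> space M \<Longrightarrow> \<bar>g w\<bar> \<le> B"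
  shows "expectation (\<lambda>w. (f w - t * g w)^2) =
     expectation (\<lambda>w. (f w)^2) - 2 * t * expectation (\<lambda>w. f w * g w) + t^2 * expectation (\<lambda>w. (g w)^2)"
proof -
  have B: "\<bar>f w * g w\<bar> \<le> B * B" "\<bar>(f w)^2\<bar> \<le> B * B" "\<bar>(g w)^2\<bar> \<le> B * B" if "w \<in> space M" for w
  proof -
    have a: "\<bar>f w\<bar> \<le> B" "\<bar>g w\<bar> \<le> B" using assms(3,4)[OF that] by auto
    have B0: "0 \<le> B" using a(1) by linarith
    have "\<bar>f w\<bar> * \<bar>g w\<bar> \<le> B * B" "\<bar>f w\<bar> * \<bar>f w\<bar> \<le> B * B" "\<bar>g w\<bar> * \<bar>g w\<bar> \<le> B * B"
      using mult_mono[OF a(1) a(2) B0 abs_ge_zero] mult_mono[OF a(1) a(1) B0 abs_ge_zero]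
        mult_mono[OF a(2) a(2) B0 abs_ge_zero] by auto
    then show "\<bar>f w * g w\<bar> \<le> B * B" "\<bar>(f w)^2\<bar> \<le> B * B" "\<bar>(g w)^2\<bar> \<le> B * B"
      by (auto simp: abs_mult power2_eq_square)
  qed
  have i1: "integrable M (\<lambda>w. f w * g w)" using assms B by (intro intb[where B="B*B"]) auto
  have i2: "integrable M (\<lambda>w. (f w)^2)" using assms B by (intro intb[where B="B*B"]) auto
  have i3: "integrable M (\<lambda>w. (g w)^2)" using assms B by (intro intb[where B="B*B"]) auto
  have "(\<lambda>w. (f w - t * g w)^2) = (\<lambda>w. ((f w)^2 - (2 * t) * (f w * g w)) + t^2 * (g w)^2)"
    by (auto simp: power2_eq_square algebra_simps)
  then show ?thesis using i1 i2 i3 by simp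
qed

end



context prob_space begin

lemma stepA:
  assumes XXL: "XX \<subseteq> L0plus M"
    and hyp: "\<forall>Y\<in>L0plus M. (\<forall>n. Y \<in> O_set M XX n) \<longleftrightarrow> (AE \<omega> in M. Y \<omega> = 0)"
    and A: "A \<in> events" "prob A > 0"
  shows "\<exists>N \<delta>. \<delta> > 0 \<and> (\<forall>V\<in>O_set M XX N. (\<forall>w\<in>space M. V w \<le> 1) \<longrightarrow>
            \<delta> \<le> expectation (\<lambda>w. (indicator A w - V w)^2))"
proof (rule ccontr)
  assume neg: "\<not> ?thesis"
  have "\<forall>N. \<exists>V. V \<in> O_set M XX N \<and> (\<forall>w\<in>space M. V w \<le> 1) \<and>
      expectation (\<lambda>w. (indicator A w - V w)^2) < prob A / 2^(N+4)"
  proof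
    fix N
    have "0 < prob A / 2^(N+4)" using A(2) by simp
    then show "\<exists>V. V \<in> O_set M XX N \<and> (\<forall>w\<in>space M. V w \<le> 1) \<and>
      expectation (\<lambda>w. (indicator A w - V w)^2) < prob A / 2^(N+4)"
    proof -
      have h: "\<And>N \<delta>. 0<\<delta> \<Longrightarrow> \<exists>V\<in>O_set M XX N. (\<forall>w\<in>space M. V w \<le> 1) \<and>
            expectation (\<lambda>w. (indicator A w - V w)^2) < \<delta>" using neg by (auto simp: not_le)
      from h[OF \<open>0 < prob A / 2^(N+4)\<close>, of N] show ?thesis by blast
    qed
  qed
  from choice[OF this] obtain V where V: "\<And>N. V N \<in> O_set M XX N" "\<And>N w. w \<in> space M \<Longrightarrow> V N w \<le> 1"
    "\<And>N. expectation (\<lambda>w. (indicator A w - V N w)^2) < prob A / 2^(N+4)" by blast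
  have Vm[measurable]: "\<And>N. V N \<in> borel_measurable M" using V(1) by (rule O_set_meas)
  have V0: "\<And>N w. w \<in> space M \<Longrightarrow> 0 \<le> V N w" using V(1) by (rule O_set_nonneg)
  define C where "C N = {w \<in> space M. 1/2 \<le> V N w}" for N
  have C[measurable]: "C N \<in> events" for N unfolding C_def by measurable
  define E where "E N = A - C N" for N
  have E[measurable]: "E N \<in> events" for N unfolding E_def using A(1) by measurable
  have bnd: "prob (E N) \<le> prob A / 2^(N+2)" for N
  proof -
    have "prob (E N) = expectation (indicator (E N))" using E[of N] sets.sets_into_space
      by (simp add: Int_absorb2)
    also have "\<dots> \<le> expectation (\<lambda>w. 4 * (indicator A w - V N w)^2)"
    proof (rule integral_mono)
      show "integrable M (indicator (E N) :: 'a \<Rightarrow> real)"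
        by (rule intb[where B=1]) (auto split: split_indicator)
      show "integrable M (\<lambda>w. 4 * (indicator A w - V N w)^2)"
      proof (rule intb[where B=4])
        show "(\<lambda>w. 4 * (indicator A w - V N w)\<^sup>2) \<in> borel_measurable M" using A(1) by measurable
        fix w assume w: "w \<in> space M"
        have "\<bar>indicator A w - V N w\<bar> \<le> 1" using V0[OF w, of N] V(2)[OF w, of N]
          by (auto split: split_indicator)
        then have "(indicator A w - V N w)^2 \<le> 1" by (simp add: abs_square_le_1)
        then show "\<bar>4 * (indicator A w - V N w)\<^sup>2\<bar> \<le> 4" by simp
      qed
      fix w assume w: "w \<in> space M"
      show "indicator (E N) w \<le> 4 * (indicator A w - V N w)^2"
      proof (cases "w \<in> E N")
        case True
        then have "w \<in> A" "V N w < 1/2" using w unfolding E_def C_def by auto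
        moreover have "0 \<le> V N w" using V0[OF w] .
        ultimately have "1/2 \<le> indicator A w - V N w" by simp
        then have "(1/2)^2 \<le> (indicator A w - V N w)^2" by (intro power_mono) auto
        then have "1/4 \<le> (indicator A w - V N w)^2" by (simp add: power_divide)
        moreover have "indicator (E N) w = (1::real)" using True by simp
        ultimately show ?thesis by linarith
      qed simp
    qed
    also have "\<dots> = 4 * expectation (\<lambda>w. (indicator A w - V N w)^2)" by simp
    also have "\<dots> \<le> 4 * (prob A / 2^(N+4))" using V(3)[of N] by simp
    also have "\<dots> = prob A / 2^(N+2)" by (simp add: power_add)
    finally show ?thesis .
  qed
  have eq: "(\<lambda>N::nat. prob A / 2^(N+2)) = (\<lambda>N. (prob A / 4) * (1/2)^N)"
    by (rule ext) (simp add: power_add power_one_over)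
  have summ: "summable (\<lambda>N. prob A / 2^(N+2))"
    unfolding eq by (intro summable_mult summable_geometric) simp
  have sumval: "(\<Sum>N. prob A / 2^(N+2)) = prob A / 2"
  proof -
    have g: "(\<Sum>N. (1/2::real)^N) = 2" using suminf_geometric[of "1/2::real"] by simp
    have s: "summable (\<lambda>N. (1/2::real)^N)" by (rule summable_geometric) simp
    show ?thesis unfolding eq suminf_mult[OF s] g by simp
  qed
  have summE: "summable (\<lambda>N. prob (E N))"
    by (rule summable_comparison_test'[OF summ, of 0]) (use bnd in auto)
  have UE: "prob (\<Union>N. E N) \<le> prob A / 2"
  proof -
    have "prob (\<Union>N. E N) \<le> (\<Sum>N. prob (E N))"
      by (rule finite_measure_subadditive_countably) (use summE in auto)
    also have "\<dots> \<le> (\<Sum>N. prob A / 2^(N+2))" by (rule suminf_le[OF bnd summE summ])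
    finally show ?thesis using sumval by simp
  qed
  define A' where "A' = A - (\<Union>N. E N)"
  have A'[measurable]: "A' \<in> events" unfolding A'_def using A(1) by measurable
  have "prob A' = prob A - prob (A \<inter> (\<Union>N. E N))" unfolding A'_def
    by (rule finite_measure_Diff') (use A(1) in auto)
  moreover have "prob (A \<inter> (\<Union>N. E N)) \<le> prob (\<Union>N. E N)"
    by (rule finite_measure_mono) auto
  ultimately have pA': "prob A' > 0" using UE A(2) by simp
  define Y where "Y w = indicator A' w / (2::real)" for w
  have Ym[measurable]: "Y \<in> borel_measurable M" unfolding Y_def by measurable
  have YL: "Y \<in> L0plus M" unfolding L0plus_def Y_def by auto
  have "Y \<in> O_set M XX N" for N
  proof (rule O_set_solid[OF V(1)[of N] Ym])
    fix w assume w: "w \<in> space M"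
    show "0 \<le> Y w \<and> Y w \<le> V N w"
    proof (cases "w \<in> A'")
      case True
      then have "w \<notin> E N" unfolding A'_def by auto
      with True have "w \<in> C N" unfolding A'_def E_def by auto
      then show ?thesis using True unfolding Y_def C_def by auto
    qed (use V0[OF w] in \<open>auto simp: Y_def\<close>)
  qed
  with hyp YL have "AE w in M. Y w = 0" by auto
  then have "AE w in M. w \<notin> A'" by eventually_elim (auto simp: Y_def split: split_indicator)
  then have "prob A' = 0" using prob_eq_0[OF A'] by simp
  with pA' show False by simp
qed

end



lemma amgm: fixes a x :: real assumes "0 < a" shows "2 * \<bar>x\<bar> \<le> a * x^2 + 1/a"
proof -
  have "0 \<le> (a * \<bar>x\<bar> - 1)^2" by simp
  then have "2 * a * \<bar>x\<bar> \<le> a^2 * x^2 + 1" by (simp add: power2_eq_square algebra_simps)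
  note h = this
  have "2*\<bar>x\<bar> = (2*a*\<bar>x\<bar>)/a" using assms by simp
  also have "\<dots> \<le> (a^2*x^2+1)/a" by (rule divide_right_mono) (use h assms in auto)
  also have "\<dots> = a*x^2 + 1/a" using assms by (simp add: power2_eq_square add_divide_distrib)
  finally show ?thesis .
qed

lemma sq_min_le: fixes a z :: real assumes "0 \<le> a" "a \<le> 1" "0 \<le> z"
  shows "(a - min 1 z)^2 \<le> (a - z)^2"
proof (cases "z \<le> 1")
  case False
  then have "\<bar>a - 1\<bar> \<le> \<bar>a - z\<bar>" using assms by auto
  then show ?thesis using False by (simp add: abs_le_square_iff)
qed simp

lemma sup_min_ennreal: fixes b y :: real assumes "0 \<le> b" "0 \<le> y"
  shows "(SUP m::nat. ennreal (b * min y (real m))) = ennreal (b * y)"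
proof (rule antisym)
  show "(SUP m::nat. ennreal (b * min y (real m))) \<le> ennreal (b * y)"
    using assms by (intro SUP_least ennreal_leI mult_left_mono) auto
  obtain m :: nat where "y \<le> real m" using real_arch_simple by blast
  then have "ennreal (b * y) = ennreal (b * min y (real m))" by simp
  then show "ennreal (b * y) \<le> (SUP m::nat. ennreal (b * min y (real m)))"
    by (metis UNIV_I SUP_upper)
qed

context prob_space begin

lemma intsq:
  fixes f :: "'a \<Rightarrow> real"
  assumes "f \<in> borel_measurable M" "\<And>w. w \<in> space M \<Longrightarrow> \<bar>f w\<bar> \<le> B"
  shows "integrable M (\<lambda>w. (f w)^2)"
proof (rule intb[where B="B*B"])
  show "(\<lambda>w. (f w)^2) \<in> borel_measurable M" using assms(1) by measurable
  fix w assume w: "w \<in> space M"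
  have a: "\<bar>f w\<bar> \<le> B" using assms(2)[OF w] .
  have B0: "0 \<le> B" using a by linarith
  have "\<bar>f w\<bar> * \<bar>f w\<bar> \<le> B * B" using mult_mono[OF a a B0 abs_ge_zero] .
  then show "\<bar>(f w)^2\<bar> \<le> B * B" by (simp add: power2_eq_square abs_mult)
qed

lemma dc:
  fixes s :: "nat \<Rightarrow> 'a \<Rightarrow> real"
  assumes "\<And>i. s i \<in> borel_measurable M" "f \<in> borel_measurable M"
    "AE w in M. (\<lambda>i. s i w) \<longlonglongrightarrow> f w" "\<And>i w. w \<in> space M \<Longrightarrow> \<bar>s i w\<bar> \<le> B"
  shows "(\<lambda>i. expectation (s i)) \<longlonglongrightarrow> expectation f"
  by (rule integral_dominated_convergence[where w="\<lambda>_. B"]) (use assms in auto)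

end



context prob_space begin

lemma stepB:
  assumes XXL: "XX \<subseteq> L0plus M" and X0: "X0 \<in> XX"
    and A[measurable]: "A \<in> events"
    and dpos: "\<delta> > 0"
    and dbound: "\<forall>V\<in>O_set M XX N. (\<forall>w\<in>space M. V w \<le> 1) \<longrightarrow> \<delta> \<le> expectation (\<lambda>w. (indicator A w - V w)^2)"
  shows "\<exists>B\<in>events. B \<subseteq> A \<and> prob B > 0 \<and>
           (\<exists>K. \<forall>X\<in>XX. (\<integral>\<^sup>+w. ennreal (X w) * indicator B w \<partial>M) \<le> ennreal K)"
proof -
  define Db where "Db = {V\<in>O_set M XX N. \<forall>w\<in>space M. V w \<le> 1}"
  define \<phi> :: "('a \<Rightarrow> real) \<Rightarrow> real" where "\<phi> V = expectation (\<lambda>w. (indicator A w - V w)^2)" for V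
  define d where "d = Inf (\<phi> ` Db)"
  have z: "(\<lambda>_. 0) \<in> Db" unfolding Db_def using O_set_zero[OF X0] by auto
  have phi0: "0 \<le> \<phi> V" for V unfolding \<phi>_def by (intro integral_nonneg_AE AE_I2) simp
  have bdd: "bdd_below (\<phi> ` Db)" using phi0 by (intro bdd_belowI) auto
  have dle: "d \<le> \<phi> V" if "V \<in> Db" for V unfolding d_def using bdd that by (intro cInf_lower) auto
  have dge: "\<delta> \<le> d" unfolding d_def using z dbound
    by (intro cInf_greatest) (auto simp: Db_def \<phi>_def)
  have "\<exists>V\<in>Db. \<phi> V < d + (1/8)^j" for j
  proof -
    have "Inf (\<phi> ` Db) < d + (1/8)^j" unfolding d_def by simp
    then show ?thesis using z bdd by (subst (asm) cInf_less_iff) auto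
  qed
  then have "\<forall>j. \<exists>V. V \<in> Db \<and> \<phi> V < d + (1/8)^j" by blast
  from choice[OF this] obtain W where W: "\<And>j. W j \<in> Db" "\<And>j. \<phi> (W j) < d + (1/8)^j" by blast
  have WO: "W j \<in> O_set M XX N" for j using W(1) unfolding Db_def by auto
  have Wm[measurable]: "W j \<in> borel_measurable M" for j using WO by (rule O_set_meas)
  have W01: "0 \<le> W j w" "W j w \<le> 1" if "w \<in> space M" for j w
    using O_set_nonneg[OF WO that] W(1)[of j] that unfolding Db_def by auto
  have Wd: "\<bar>W i w - W j w\<bar> \<le> 1" if "w \<in> space M" for i j w
    using W01[OF that, of i] W01[OF that, of j] unfolding abs_le_iff by auto
  have indb: "\<bar>indicator A w - V\<bar> \<le> 1" if "0 \<le> V" "V \<le> 1" for w and V :: real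
    using that by (auto split: split_indicator)
  have phiint: "integrable M (\<lambda>w. (indicator A w - V w)^2)" if "V \<in> Db" for V
  proof -
    have "V \<in> O_set M XX N" using that unfolding Db_def by auto
    then have "V \<in> borel_measurable M" "\<And>w. w \<in> space M \<Longrightarrow> 0 \<le> V w" by (auto intro: O_set_meas O_set_nonneg)
    moreover have "\<And>w. w \<in> space M \<Longrightarrow> V w \<le> 1" using that unfolding Db_def by auto
    ultimately show ?thesis by (intro intsq[where B=1]) (auto intro: indb)
  qed
  have par: "expectation (\<lambda>w. (W i w - W j w)^2) \<le> 2 * (\<phi> (W i) + \<phi> (W j)) - 4 * d" for i j
  proof -
    define mid where "mid w = (1/2) * W i w + (1 - 1/2) * W j w" for w
    have midO: "mid \<in> O_set M XX N" unfolding mid_def by (rule O_set_convex[OF WO WO]) auto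
    have "mid w \<le> 1" if "w \<in> space M" for w using W01(2)[OF that, of i] W01(2)[OF that, of j] by (simp add: mid_def)
    then have midD: "mid \<in> Db" unfolding Db_def using midO by auto
    have i1: "integrable M (\<lambda>w. (W i w - W j w)^2)"
      by (rule intsq[where B=1]) (use Wd in auto)
    have "\<phi> (W i) + \<phi> (W j) = expectation (\<lambda>w. (indicator A w - W i w)^2 + (indicator A w - W j w)^2)"
      unfolding \<phi>_def using phiint[OF W(1)] by simp
    also have "\<dots> = expectation (\<lambda>w. 2 * (indicator A w - mid w)^2 + (1/2) * (W i w - W j w)^2)"
      by (rule Bochner_Integration.integral_cong) (auto simp: mid_def power2_eq_square algebra_simps)
    also have "\<dots> = 2 * \<phi> mid + (1/2) * expectation (\<lambda>w. (W i w - W j w)^2)"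
      unfolding \<phi>_def using phiint[OF midD] i1 by simp
    finally show ?thesis using dle[OF midD] by simp
  qed
  have cons: "expectation (\<lambda>w. (W (Suc j) w - W j w)^2) \<le> 4 * (1/8)^j" for j
  proof -
    have "expectation (\<lambda>w. (W (Suc j) w - W j w)^2) \<le> 2 * (\<phi> (W (Suc j)) + \<phi> (W j)) - 4 * d"
      by (rule par)
    also have "\<dots> \<le> 2 * ((d + (1/8)^(Suc j)) + (d + (1/8)^j)) - 4 * d"
      using W(2)[of j] W(2)[of "Suc j"] by simp
    also have "\<dots> \<le> 4 * (1/8)^j" by simp
    finally show ?thesis .
  qed
  have L1: "expectation (\<lambda>w. \<bar>W (Suc j) w - W j w\<bar>) \<le> 3 * (1/2)^j" for j
  proof -
    have a: "(0::real) < 2^j" by simp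
    have "expectation (\<lambda>w. \<bar>W (Suc j) w - W j w\<bar>) \<le>
        expectation (\<lambda>w. (1/2) * (2^j * (W (Suc j) w - W j w)^2 + 1/2^j))"
    proof (rule integral_mono)
      show "integrable M (\<lambda>w. \<bar>W (Suc j) w - W j w\<bar>)"
        by (rule intb[where B=1]) (use Wd in auto)
      show "integrable M (\<lambda>w. (1/2) * (2^j * (W (Suc j) w - W j w)^2 + 1/2^j))"
        using intsq[where B=1 and f="\<lambda>w. W (Suc j) w - W j w"] Wd by auto
      show "\<bar>W (Suc j) w - W j w\<bar> \<le> (1/2) * (2^j * (W (Suc j) w - W j w)^2 + 1/2^j)" for w
        using amgm[OF a, of "W (Suc j) w - W j w"] by simp
    qed
    also have "\<dots> = (1/2) * (2^j * expectation (\<lambda>w. (W (Suc j) w - W j w)^2) + 1/2^j)"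
      using intsq[where B=1 and f="\<lambda>w. W (Suc j) w - W j w"] Wd by (simp add: prob_space)
    also have "\<dots> \<le> (1/2) * (2^j * (4 * (1/8)^j) + 1/2^j)"
      using cons[of j] by (intro mult_left_mono add_right_mono) auto
    also have "\<dots> \<le> 3 * (1/2)^j"
    proof -
      have e1: "2^j * (4 * (1/8::real)^j) = 4 * (1/4)^j"
        by (simp add: power_mult_distrib[symmetric])
      have e2: "(1/4::real)^j \<le> (1/2)^j" by (intro power_mono) auto
      have e3: "1/2^j = (1/2::real)^j" by (simp add: power_one_over)
      have e4: "0 \<le> (1/2::real)^j" by simp
      have aux: "\<And>x y::real. x \<le> y \<Longrightarrow> 0 \<le> y \<Longrightarrow> 1/2*(4*x+y) \<le> 3*y" by (simp add: field_simps)
      show ?thesis unfolding e1 e3 using aux[OF e2 e4] .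
    qed
    finally show ?thesis by simp
  qed
  define S where "S w = (\<Sum>j. ennreal \<bar>W (Suc j) w - W j w\<bar>)" for w
  have Sm[measurable]: "S \<in> borel_measurable M" unfolding S_def by measurable
  have "(\<integral>\<^sup>+w. S w \<partial>M) = (\<Sum>j. \<integral>\<^sup>+w. ennreal \<bar>W (Suc j) w - W j w\<bar> \<partial>M)"
    unfolding S_def by (rule nn_integral_suminf) measurable
  also have "\<dots> = (\<Sum>j. ennreal (expectation (\<lambda>w. \<bar>W (Suc j) w - W j w\<bar>)))"
  proof (rule suminf_cong)
    fix j
    show "(\<integral>\<^sup>+w. ennreal \<bar>W (Suc j) w - W j w\<bar> \<partial>M) = ennreal (expectation (\<lambda>w. \<bar>W (Suc j) w - W j w\<bar>))"
      by (rule nn_integral_eq_integral) (auto intro!: intb[where B=1] Wd)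
  qed
  also have "\<dots> \<le> (\<Sum>j. ennreal (3 * (1/2)^j))"
    by (intro suminf_le summableI ennreal_leI L1)
  also have "\<dots> = ennreal (\<Sum>j. 3 * (1/2)^j)"
    by (rule suminf_ennreal2) (auto intro!: summable_mult summable_geometric)
  finally have "(\<integral>\<^sup>+w. S w \<partial>M) \<noteq> \<infinity>" by (auto simp: top_unique)
  then have AEfin: "AE w in M. S w \<noteq> \<infinity>" by (intro nn_integral_PInf_AE) auto
  have AEconv: "AE w in M. convergent (\<lambda>j. W j w)"
    using AEfin
  proof eventually_elim
    case (elim w)
    then have "summable (\<lambda>j. \<bar>W (Suc j) w - W j w\<bar>)"
      unfolding S_def by (intro summable_suminf_not_top) auto
    then have "summable (\<lambda>j. W (Suc j) w - W j w)" by (rule summable_rabs_cancel)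
    then have "(\<lambda>n. \<Sum>j<n. W (Suc j) w - W j w) \<longlonglongrightarrow> (\<Sum>j. W (Suc j) w - W j w)"
      by (rule summable_LIMSEQ)
    then have "(\<lambda>n. W n w - W 0 w) \<longlonglongrightarrow> (\<Sum>j. W (Suc j) w - W j w)"
      using sum_lessThan_telescope[of "\<lambda>j. W j w"] by simp
    then have "(\<lambda>n. (W n w - W 0 w) + W 0 w) \<longlonglongrightarrow> (\<Sum>j. W (Suc j) w - W j w) + W 0 w"
      by (intro tendsto_add) auto
    then show ?case unfolding convergent_def by auto
  qed
  define Vs where "Vs w = max 0 (min 1 (lim (\<lambda>j. W j w)))" for w
  have Vsm[measurable]: "Vs \<in> borel_measurable M" unfolding Vs_def by measurable
  have Vs01: "0 \<le> Vs w" "Vs w \<le> 1" for w unfolding Vs_def by auto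
  have AElim: "AE w in M. (\<lambda>j. W j w) \<longlonglongrightarrow> Vs w"
    using AEconv AE_space
  proof eventually_elim
    case (elim w)
    then have L: "(\<lambda>j. W j w) \<longlonglongrightarrow> lim (\<lambda>j. W j w)" by (simp add: convergent_LIMSEQ_iff)
    have "0 \<le> lim (\<lambda>j. W j w)" by (rule LIMSEQ_le_const[OF L]) (use W01 elim in auto)
    moreover have "lim (\<lambda>j. W j w) \<le> 1" by (rule LIMSEQ_le_const2[OF L]) (use W01 elim in auto)
    ultimately have "Vs w = lim (\<lambda>j. W j w)" unfolding Vs_def by auto
    then show ?case using L by simp
  qed
  define h where "h w = indicator A w - Vs w" for w
  have hm[measurable]: "h \<in> borel_measurable M" unfolding h_def by measurable
  have hb: "\<bar>h w\<bar> \<le> 1" for w unfolding h_def using Vs01[of w] by (auto split: split_indicator)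
  have phid: "(\<lambda>j. \<phi> (W j)) \<longlonglongrightarrow> d"
  proof (rule tendsto_sandwich[where f="\<lambda>_. d" and h="\<lambda>j. d + (1/8)^j"])
    show "\<forall>\<^sub>F j in sequentially. d \<le> \<phi> (W j)" using dle[OF W(1)] by simp
    show "\<forall>\<^sub>F j in sequentially. \<phi> (W j) \<le> d + (1/8)^j" using W(2) by (simp add: less_imp_le)
    have "(\<lambda>j. d + (1/8::real)^j) \<longlonglongrightarrow> d + 0" by (intro tendsto_add LIMSEQ_power_zero) auto
    then show "(\<lambda>j. d + (1/8::real)^j) \<longlonglongrightarrow> d" by simp
  qed simp
  have phiVs: "(\<lambda>j. \<phi> (W j)) \<longlonglongrightarrow> expectation (\<lambda>w. (h w)^2)"
    unfolding \<phi>_def h_def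
  proof (rule dc[where B=1])
    show "AE w in M. (\<lambda>j. (indicator A w - W j w)^2) \<longlonglongrightarrow> (indicator A w - Vs w)^2"
      using AElim by eventually_elim (intro tendsto_intros)
    fix j w assume "w \<in> space M"
    then have "\<bar>indicator A w - W j w\<bar> \<le> 1" using W01 indb by auto
    then show "\<bar>(indicator A w - W j w)^2\<bar> \<le> 1" by (simp add: abs_square_le_1)
  qed measurable
  have hd: "expectation (\<lambda>w. (h w)^2) = d" using LIMSEQ_unique[OF phiVs phid] .
  have var: "d \<le> expectation (\<lambda>w. (h w - t * (V w - Vs w))^2)"
    if V: "V \<in> O_set M XX N" "\<And>w. w \<in> space M \<Longrightarrow> V w \<le> m" and m: "0 \<le> m"
      and t: "0 \<le> t" "t \<le> 1" for V t m
  proof -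
    have Vm[measurable]: "V \<in> borel_measurable M" using V(1) by (rule O_set_meas)
    have V0: "\<And>w. w \<in> space M \<Longrightarrow> 0 \<le> V w" using V(1) by (rule O_set_nonneg)
    define mix where "mix j w = t * V w + (1 - t) * W j w" for j w
    have mixm[measurable]: "mix j \<in> borel_measurable M" for j unfolding mix_def by measurable
    have mixO: "mix j \<in> O_set M XX N" for j unfolding mix_def by (rule O_set_convex[OF V(1) WO t])
    have mixb: "0 \<le> mix j w \<and> mix j w \<le> m + 1" if "w \<in> space M" for j w
    proof -
      have "t * V w \<le> 1 * m" using t V(2)[OF that] V0[OF that] m by (intro mult_mono) auto
      moreover have "(1 - t) * W j w \<le> 1 * 1" using t W01[OF that, of j] by (intro mult_mono) auto
      moreover have "0 \<le> t * V w" "0 \<le> (1 - t) * W j w" using t V0[OF that] W01[OF that, of j] by auto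
      ultimately show ?thesis unfolding mix_def by linarith
    qed
    have mixd: "\<bar>indicator A w - mix j w\<bar> \<le> m + 1" if "w \<in> space M" for j w
      using mixb[OF that, of j] m by (auto split: split_indicator)
    have each: "d \<le> expectation (\<lambda>w. (indicator A w - mix j w)^2)" for j
    proof -
      define c where "c w = min 1 (mix j w)" for w
      have cm[measurable]: "c \<in> borel_measurable M" unfolding c_def by measurable
      have cO: "c \<in> O_set M XX N"
        by (rule O_set_solid[OF mixO[of j] cm]) (use mixb in \<open>auto simp: c_def\<close>)
      have cD: "c \<in> Db" unfolding Db_def using cO by (auto simp: c_def)
      have "d \<le> \<phi> c" by (rule dle[OF cD])
      also have "\<phi> c \<le> expectation (\<lambda>w. (indicator A w - mix j w)^2)"
        unfolding \<phi>_def
      proof (rule integral_mono)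
        show "integrable M (\<lambda>w. (indicator A w - c w)^2)" by (rule phiint[OF cD])
        show "integrable M (\<lambda>w. (indicator A w - mix j w)^2)"
          by (rule intsq[where B="m+1"]) (use mixd in auto)
        fix w assume w: "w \<in> space M"
        show "(indicator A w - c w)^2 \<le> (indicator A w - mix j w)^2"
          unfolding c_def by (rule sq_min_le) (use mixb[OF w, of j] in \<open>auto split: split_indicator\<close>)
      qed
      finally show ?thesis .
    qed
    have lim: "(\<lambda>j. expectation (\<lambda>w. (indicator A w - mix j w)^2)) \<longlonglongrightarrow>
        expectation (\<lambda>w. (indicator A w - (t * V w + (1 - t) * Vs w))^2)"
    proof (rule dc[where B="(m+1)^2"])
      show "AE w in M. (\<lambda>j. (indicator A w - mix j w)^2) \<longlonglongrightarrow> (indicator A w - (t * V w + (1 - t) * Vs w))^2"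
        using AElim unfolding mix_def by eventually_elim (intro tendsto_intros)
      fix j w assume w: "w \<in> space M"
      have "\<bar>indicator A w - mix j w\<bar>^2 \<le> (m+1)^2" using mixd[OF w, of j] by (intro power_mono) auto
      then show "\<bar>(indicator A w - mix j w)^2\<bar> \<le> (m+1)^2" by simp
    qed measurable
    have "d \<le> expectation (\<lambda>w. (indicator A w - (t * V w + (1 - t) * Vs w))^2)"
      by (rule LIMSEQ_le_const[OF lim]) (use each in auto)
    also have "(\<lambda>w. (indicator A w - (t * V w + (1 - t) * Vs w))^2) = (\<lambda>w. (h w - t * (V w - Vs w))^2)"
      by (auto simp: h_def algebra_simps)
    finally show ?thesis .
  qed
  have ip: "expectation (\<lambda>w. h w * V w) \<le> expectation (\<lambda>w. h w * Vs w)"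
    if V: "V \<in> O_set M XX N" "\<And>w. w \<in> space M \<Longrightarrow> V w \<le> m" and m: "0 \<le> m" for V m
  proof -
    have Vm[measurable]: "V \<in> borel_measurable M" using V(1) by (rule O_set_meas)
    have V0: "\<And>w. w \<in> space M \<Longrightarrow> 0 \<le> V w" using V(1) by (rule O_set_nonneg)
    define u where "u w = V w - Vs w" for w
    have um[measurable]: "u \<in> borel_measurable M" unfolding u_def by measurable
    have ub: "\<bar>u w\<bar> \<le> m + 1" if "w \<in> space M" for w
      using V0[OF that] V(2)[OF that] Vs01[of w] m unfolding u_def by (auto simp: abs_le_iff)
    have hb': "\<bar>h w\<bar> \<le> m + 1" for w using hb[of w] m by linarith
    define p where "p = expectation (\<lambda>w. h w * u w)"
    define q where "q = expectation (\<lambda>w. (u w)^2)"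
    have q0: "0 \<le> q" unfolding q_def by (intro integral_nonneg_AE AE_I2) simp
    have key: "2 * t * p \<le> t^2 * q" if t: "0 \<le> t" "t \<le> 1" for t
    proof -
      have "d \<le> expectation (\<lambda>w. (h w - t * u w)^2)" unfolding u_def by (rule var[OF V m t])
      also have "\<dots> = expectation (\<lambda>w. (h w)^2) - 2 * t * p + t^2 * q"
        unfolding p_def q_def by (rule exp_quad[where B="m+1"]) (use ub hb' in auto)
      finally show ?thesis using hd by simp
    qed
    have p0: "p \<le> 0"
    proof (rule ccontr)
      assume "\<not> p \<le> 0"
      then have pp: "0 < p" by simp
      define t where "t = min 1 (p / (q + 1))"
      have t0: "0 < t" "t \<le> 1" unfolding t_def using pp q0 by auto
      have "t * q \<le> (p / (q + 1)) * q" unfolding t_def using q0 by (intro mult_right_mono) auto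
      also have "\<dots> < p" using pp q0 by (simp add: field_simps)
      finally have tq: "t * q < p" .
      have "2 * t * p \<le> t^2 * q" using key t0 by simp
      then have "t * (2 * p) \<le> t * (t * q)" by (simp add: power2_eq_square algebra_simps)
      then have "2 * p \<le> t * q" using t0 by (simp add: mult_le_cancel_left)
      with tq pp show False by simp
    qed
    have ih: "integrable M (\<lambda>w. h w * V w)"
    proof (rule intb[where B="m"])
      fix w assume w: "w \<in> space M"
      have "\<bar>h w\<bar> * \<bar>V w\<bar> \<le> 1 * m" by (rule mult_mono) (use hb V0[OF w] V(2)[OF w] m in auto)
      then show "\<bar>h w * V w\<bar> \<le> m" by (simp add: abs_mult)
    qed measurable
    have ihs: "integrable M (\<lambda>w. h w * Vs w)"
      by (rule intb[where B="1"]) (use hb Vs01 in \<open>auto simp: abs_mult intro: mult_le_one\<close>)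
    have "p = expectation (\<lambda>w. h w * V w) - expectation (\<lambda>w. h w * Vs w)"
      unfolding p_def u_def using ih ihs by (simp add: right_diff_distrib)
    with p0 show ?thesis by simp
  qed
  define c where "c = expectation (\<lambda>w. h w * Vs w)"
  have hp: "expectation (\<lambda>w. max (h w) 0 * V w) \<le> c"
    if V: "V \<in> O_set M XX N" "\<And>w. w \<in> space M \<Longrightarrow> V w \<le> m" and m: "0 \<le> m" for V m
  proof -
    have Vm[measurable]: "V \<in> borel_measurable M" using V(1) by (rule O_set_meas)
    have V0: "\<And>w. w \<in> space M \<Longrightarrow> 0 \<le> V w" using V(1) by (rule O_set_nonneg)
    define V' where "V' w = (if 0 < h w then V w else 0)" for w
    have V'm[measurable]: "V' \<in> borel_measurable M" unfolding V'_def by measurable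
    have V'O: "V' \<in> O_set M XX N"
      by (rule O_set_solid[OF V(1) V'm]) (use V0 in \<open>auto simp: V'_def\<close>)
    have "expectation (\<lambda>w. h w * V' w) \<le> c" unfolding c_def
      by (rule ip[OF V'O _ m]) (use V(2) m in \<open>auto simp: V'_def\<close>)
    moreover have "(\<lambda>w. h w * V' w) = (\<lambda>w. max (h w) 0 * V w)" by (auto simp: V'_def max_def)
    ultimately show ?thesis by simp
  qed
  have c0: "0 \<le> c"
  proof -
    have "expectation (\<lambda>w. max (h w) 0 * 0) \<le> c" by (rule hp[OF O_set_zero[OF X0], of 0]) auto
    then show ?thesis by simp
  qed
  have hpA: "c < expectation (\<lambda>w. max (h w) 0 * indicator A w)"
  proof -
    have ihA: "integrable M (\<lambda>w. h w * indicator A w)"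
      by (rule intb[where B=1]) (use hb in \<open>auto split: split_indicator\<close>)
    have "expectation (\<lambda>w. h w * indicator A w) = expectation (\<lambda>w. (h w)^2 + h w * Vs w)"
      by (rule Bochner_Integration.integral_cong) (auto simp: h_def power2_eq_square algebra_simps)
    also have "\<dots> = d + c" unfolding c_def hd[symmetric]
    proof (rule Bochner_Integration.integral_add)
      show "integrable M (\<lambda>w. (h w)^2)" by (rule intsq[where B=1]) (use hb in auto)
      show "integrable M (\<lambda>w. h w * Vs w)"
        by (rule intb[where B="1"]) (use hb Vs01 in \<open>auto simp: abs_mult intro: mult_le_one\<close>)
    qed
    finally have e: "expectation (\<lambda>w. h w * indicator A w) = d + c" .
    have "expectation (\<lambda>w. h w * indicator A w) \<le> expectation (\<lambda>w. max (h w) 0 * indicator A w)"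
    proof (rule integral_mono[OF ihA])
      show "integrable M (\<lambda>w. max (h w) 0 * indicator A w)"
        by (rule intb[where B=1]) (use hb in \<open>auto split: split_indicator simp: abs_le_iff\<close>)
    qed (auto split: split_indicator)
    with e dge dpos show ?thesis by simp
  qed
  have "\<exists>n. 0 < prob (A \<inter> {w\<in>space M. 1/real (Suc n) \<le> h w})"
  proof (rule ccontr)
    assume nz: "\<not> (\<exists>n. 0 < prob (A \<inter> {w\<in>space M. 1/real (Suc n) \<le> h w}))"
    have z: "prob (A \<inter> {w\<in>space M. 1/real (Suc n) \<le> h w}) = 0" for n
    proof -
      have "\<not> 0 < prob (A \<inter> {w\<in>space M. 1/real (Suc n) \<le> h w})" using nz by blast
      then show ?thesis using measure_nonneg[of M "A \<inter> {w\<in>space M. 1/real (Suc n) \<le> h w}"] by linarith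
    qed
    have "AE w in M. w \<notin> A \<inter> {w\<in>space M. 1/real (Suc n) \<le> h w}" for n
      using prob_eq_0[of "A \<inter> {w\<in>space M. 1/real (Suc n) \<le> h w}"] z[of n] by simp
    then have "AE w in M. \<forall>n. w \<notin> A \<inter> {w\<in>space M. 1/real (Suc n) \<le> h w}"
      by (subst AE_all_countable) blast
    then have "AE w in M. max (h w) 0 * indicator A w = 0"
      using AE_space
    proof eventually_elim
      case (elim w)
      show ?case
      proof (cases "w \<in> A \<and> 0 < h w")
        case True
        then obtain n where n: "0 < n" "inverse (real n) < h w" using ex_inverse_of_nat_less by blast
        then have "1/real (Suc (n - 1)) \<le> h w" by (simp add: inverse_eq_divide)
        with True elim show ?thesis by auto
      qed auto
    qed
    then have "expectation (\<lambda>w. max (h w) 0 * indicator A w) = expectation (\<lambda>w. 0)"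
      by (rule integral_cong_AE[rotated 2]) measurable
    then show False using hpA c0 by simp
  qed
  then obtain n where n: "0 < prob (A \<inter> {w\<in>space M. 1/real (Suc n) \<le> h w})" by blast
  define \<epsilon> where "\<epsilon> = 1/real (Suc n)"
  have \<epsilon>0: "0 < \<epsilon>" unfolding \<epsilon>_def by simp
  define B where "B = A \<inter> {w\<in>space M. \<epsilon> \<le> h w}"
  have B[measurable]: "B \<in> events" unfolding B_def by measurable
  have pB: "0 < prob B" using n unfolding B_def \<epsilon>_def .
  have bound: "(\<integral>\<^sup>+w. ennreal (X w) * indicator B w \<partial>M) \<le> ennreal (real N + c / \<epsilon>)" if X: "X \<in> XX" for X
  proof -
    have Xm[measurable]: "X \<in> borel_measurable M" and X0': "\<And>w. w \<in> space M \<Longrightarrow> 0 \<le> X w"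
      using X XXL unfolding L0plus_def by auto
    define f where "f m w = ennreal (indicator B w * min (max (X w - real N) 0) (real m))" for m :: nat and w
    have fm[measurable]: "f m \<in> borel_measurable M" for m unfolding f_def by measurable
    have fb: "(\<integral>\<^sup>+w. f m w \<partial>M) \<le> ennreal (c / \<epsilon>)" for m
    proof -
      define Vm where "Vm w = min (max (X w - real N) 0) (real m)" for w
      have VmO: "Vm \<in> O_set M XX N" unfolding Vm_def by (rule O_set_single[OF X Xm]) simp
      have Vmm[measurable]: "Vm \<in> borel_measurable M" unfolding Vm_def by measurable
      have Vmb: "0 \<le> Vm w" "Vm w \<le> real m" for w unfolding Vm_def by auto
      have i1: "integrable M (\<lambda>w. indicator B w * Vm w)"
        by (rule intb[where B="real m"]) (use Vmb in \<open>auto split: split_indicator\<close>)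
      have i2: "integrable M (\<lambda>w. max (h w) 0 * Vm w)"
      proof (rule intb[where B="real m"])
        fix w
        have "max (h w) 0 * Vm w \<le> 1 * real m" by (rule mult_mono) (use hb[of w] Vmb[of w] in \<open>auto simp: abs_le_iff\<close>)
        moreover have "0 \<le> max (h w) 0 * Vm w" using Vmb[of w] by simp
        ultimately show "\<bar>max (h w) 0 * Vm w\<bar> \<le> real m" by simp
      qed measurable
      have "expectation (\<lambda>w. indicator B w * Vm w) \<le> expectation (\<lambda>w. (1/\<epsilon>) * (max (h w) 0 * Vm w))"
      proof (rule integral_mono[OF i1])
        show "integrable M (\<lambda>w. (1/\<epsilon>) * (max (h w) 0 * Vm w))" using i2 by simp
        fix w assume w: "w \<in> space M"
        show "indicator B w * Vm w \<le> (1/\<epsilon>) * (max (h w) 0 * Vm w)"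
        proof (cases "w \<in> B")
          case True
          then have "\<epsilon> \<le> h w" unfolding B_def by auto
          then have "1 \<le> (1/\<epsilon>) * max (h w) 0" using \<epsilon>0 by (simp add: field_simps)
          then have "1 * Vm w \<le> ((1/\<epsilon>) * max (h w) 0) * Vm w" using Vmb[of w] by (intro mult_right_mono) auto
          then show ?thesis using True by simp
        qed (use Vmb[of w] \<epsilon>0 in simp)
      qed
      also have "\<dots> = (1/\<epsilon>) * expectation (\<lambda>w. max (h w) 0 * Vm w)" by simp
      also have "\<dots> \<le> (1/\<epsilon>) * c"
        using hp[OF VmO _, of "real m"] Vmb \<epsilon>0 by (intro mult_left_mono) auto
      finally have e: "expectation (\<lambda>w. indicator B w * Vm w) \<le> c / \<epsilon>" by simp
      have "(\<integral>\<^sup>+w. f m w \<partial>M) = ennreal (expectation (\<lambda>w. indicator B w * Vm w))"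
        unfolding f_def Vm_def[symmetric] by (rule nn_integral_eq_integral[OF i1]) (use Vmb in simp)
      then show ?thesis using e by (simp add: ennreal_leI)
    qed
    have inc: "incseq f"
    proof (rule incseq_SucI, rule le_funI)
      fix m w show "f m w \<le> f (Suc m) w" unfolding f_def
        by (intro ennreal_leI mult_left_mono) (auto split: split_indicator)
    qed
    have "(\<integral>\<^sup>+w. ennreal (indicator B w * max (X w - real N) 0) \<partial>M) = (\<integral>\<^sup>+w. (SUP m. f m w) \<partial>M)"
      unfolding f_def by (subst sup_min_ennreal) (auto split: split_indicator)
    also have "\<dots> = (SUP m. \<integral>\<^sup>+w. f m w \<partial>M)" by (rule nn_integral_monotone_convergence_SUP[OF inc fm])
    also have "\<dots> \<le> ennreal (c / \<epsilon>)" by (rule SUP_least) (rule fb)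
    finally have tail: "(\<integral>\<^sup>+w. ennreal (indicator B w * max (X w - real N) 0) \<partial>M) \<le> ennreal (c / \<epsilon>)" .
    have "(\<integral>\<^sup>+w. ennreal (X w) * indicator B w \<partial>M) \<le>
        (\<integral>\<^sup>+w. ennreal (real N) + ennreal (indicator B w * max (X w - real N) 0) \<partial>M)"
    proof (rule nn_integral_mono)
      fix w assume w: "w \<in> space M"
      show "ennreal (X w) * indicator B w \<le> ennreal (real N) + ennreal (indicator B w * max (X w - real N) 0)"
      proof (cases "w \<in> B")
        case True
        have "ennreal (X w) \<le> ennreal (real N + max (X w - real N) 0)" by (intro ennreal_leI) auto
        also have "\<dots> = ennreal (real N) + ennreal (max (X w - real N) 0)" by (rule ennreal_plus) auto
        finally show ?thesis using True by simp
      qed simp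
    qed
    also have "\<dots> = (\<integral>\<^sup>+w. ennreal (real N) \<partial>M) + (\<integral>\<^sup>+w. ennreal (indicator B w * max (X w - real N) 0) \<partial>M)"
      by (rule nn_integral_add) auto
    also have "\<dots> \<le> ennreal (real N) + ennreal (c / \<epsilon>)"
      using tail by (simp add: emeasure_space_1)
    also have "\<dots> = ennreal (real N + c / \<epsilon>)" using c0 \<epsilon>0 by (simp add: ennreal_plus)
    finally show ?thesis .
  qed
  have "B \<subseteq> A" unfolding B_def by auto
  then show ?thesis using B pB bound by blast
qed

end



context prob_space begin

lemma XX_nonempty:
  assumes hyp: "\<forall>Y\<in>L0plus M. (\<forall>n. Y \<in> O_set M XX n) \<longleftrightarrow> (AE \<omega> in M. Y \<omega> = 0)"
  obtains X0 where "X0 \<in> XX"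
proof -
  have "(\<lambda>_. 0) \<in> L0plus M" unfolding L0plus_def by auto
  with hyp have "(\<lambda>_. 0) \<in> O_set M XX 0" by auto
  then obtain Z where "Z \<in> conv_shift XX 0" unfolding O_set_def by auto
  then obtain k :: nat and c :: "nat \<Rightarrow> real" and X :: "nat \<Rightarrow> 'a \<Rightarrow> real" where
    h: "0 < k" "\<forall>i<k. 0 \<le> c i \<and> X i \<in> XX" "(\<Sum>i<k. c i) = 1"
    "Z = (\<lambda>w. \<Sum>i<k. c i * max (X i w - real 0) 0)"
    by (rule conv_shiftE)
  then have "X 0 \<in> XX" by auto
  then show ?thesis by (rule that)
qed

lemma local_claim:
  assumes XXL: "XX \<subseteq> L0plus M"
    and hyp: "\<forall>Y\<in>L0plus M. (\<forall>n. Y \<in> O_set M XX n) \<longleftrightarrow> (AE \<omega> in M. Y \<omega> = 0)"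
    and A: "A \<in> events" "prob A > 0"
  shows "\<exists>B\<in>events. B \<subseteq> A \<and> prob B > 0 \<and>
           (\<exists>K. \<forall>X\<in>XX. (\<integral>\<^sup>+w. ennreal (X w) * indicator B w \<partial>M) \<le> ennreal K)"
proof -
  obtain X0 where X0: "X0 \<in> XX" using XX_nonempty[OF hyp] .
  from stepA[OF XXL hyp A] obtain N \<delta> where "\<delta> > 0"
    "\<forall>V\<in>O_set M XX N. (\<forall>w\<in>space M. V w \<le> 1) \<longrightarrow> \<delta> \<le> expectation (\<lambda>w. (indicator A w - V w)^2)"
    by blast
  then show ?thesis using stepB[OF XXL X0 A(1)] by blast
qed

end



context prob_space begin

definition good :: "('a \<Rightarrow> real) set \<Rightarrow> 'a set \<Rightarrow> bool" where
  "good XX B \<longleftrightarrow> B \<in> events \<and> (\<exists>K. \<forall>X\<in>XX. (\<integral>\<^sup>+w. ennreal (X w) * indicator B w \<partial>M) \<le> ennreal K)"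

lemma good_Un:
  assumes XXL: "XX \<subseteq> L0plus M" and "good XX B1" "good XX B2"
  shows "good XX (B1 \<union> B2)"
proof -
  obtain K1 where B1: "B1 \<in> events" "\<And>X. X \<in> XX \<Longrightarrow> (\<integral>\<^sup>+w. ennreal (X w) * indicator B1 w \<partial>M) \<le> ennreal K1"
    using assms(2) unfolding good_def by blast
  obtain K2 where B2: "B2 \<in> events" "\<And>X. X \<in> XX \<Longrightarrow> (\<integral>\<^sup>+w. ennreal (X w) * indicator B2 w \<partial>M) \<le> ennreal K2"
    using assms(3) unfolding good_def by blast
  have "(\<integral>\<^sup>+w. ennreal (X w) * indicator (B1 \<union> B2) w \<partial>M) \<le> ennreal (max K1 0 + max K2 0)" if X: "X \<in> XX" for X
  proof -
    have Xm[measurable]: "X \<in> borel_measurable M" using X XXL unfolding L0plus_def by auto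
    have "(\<integral>\<^sup>+w. ennreal (X w) * indicator (B1 \<union> B2) w \<partial>M) \<le>
        (\<integral>\<^sup>+w. ennreal (X w) * indicator B1 w + ennreal (X w) * indicator B2 w \<partial>M)"
      by (intro nn_integral_mono) (auto split: split_indicator)
    also have "\<dots> = (\<integral>\<^sup>+w. ennreal (X w) * indicator B1 w \<partial>M) + (\<integral>\<^sup>+w. ennreal (X w) * indicator B2 w \<partial>M)"
      using B1(1) B2(1) by (intro nn_integral_add) auto
    also have "\<dots> \<le> ennreal K1 + ennreal K2" using B1(2)[OF X] B2(2)[OF X] by (rule add_mono)
    also have "\<dots> \<le> ennreal (max K1 0) + ennreal (max K2 0)" by (intro add_mono ennreal_leI) auto
    also have "\<dots> = ennreal (max K1 0 + max K2 0)" by (rule ennreal_plus[symmetric]) auto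
    finally show ?thesis .
  qed
  then show ?thesis unfolding good_def using B1(1) B2(1) by blast
qed

lemma exhaustion:
  assumes XXL: "XX \<subseteq> L0plus M"
    and hyp: "\<forall>Y\<in>L0plus M. (\<forall>n. Y \<in> O_set M XX n) \<longleftrightarrow> (AE \<omega> in M. Y \<omega> = 0)"
  shows "\<exists>Bs::nat \<Rightarrow> 'a set. (\<forall>j. good XX (Bs j)) \<and> (AE w in M. w \<in> (\<Union>j. Bs j))"
proof -
  define P where "P = prob ` {B. good XX B}"
  have g0: "good XX {}" unfolding good_def by auto
  have Pne: "P \<noteq> {}" unfolding P_def using g0 by auto
  have Pbdd: "bdd_above P" unfolding P_def by (intro bdd_aboveI[where M=1]) auto
  define s where "s = Sup P"
  have "\<exists>B. good XX B \<and> s - 1 / real (Suc j) < prob B" for j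
  proof -
    have "s - 1 / real (Suc j) < Sup P" unfolding s_def by simp
    then obtain x where "x \<in> P" "s - 1 / real (Suc j) < x" using less_cSup_iff[OF Pne Pbdd] by blast
    then show ?thesis unfolding P_def by auto
  qed
  then have "\<forall>j. \<exists>B. good XX B \<and> s - 1 / real (Suc j) < prob B" by blast
  from choice[OF this] obtain Bs where Bs: "\<And>j. good XX (Bs j)" "\<And>j. s - 1 / real (Suc j) < prob (Bs j)"
    by blast
  have Bse[measurable]: "Bs j \<in> events" for j using Bs(1) unfolding good_def by auto
  define U where "U = (\<Union>j. Bs j)"
  have Ue[measurable]: "U \<in> events" unfolding U_def by measurable
  have "prob (space M - U) = 0"
  proof (rule ccontr)
    assume "prob (space M - U) \<noteq> 0"
    then have "0 < prob (space M - U)" using measure_nonneg[of M "space M - U"] by linarith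
    from local_claim[OF XXL hyp _ this] obtain B where B: "B \<in> events" "B \<subseteq> space M - U" "0 < prob B"
      "\<exists>K. \<forall>X\<in>XX. (\<integral>\<^sup>+w. ennreal (X w) * indicator B w \<partial>M) \<le> ennreal K" by auto
    have gB: "good XX B" unfolding good_def using B by blast
    have small: "prob B < 1 / real (Suc j)" for j
    proof -
      have "good XX (B \<union> Bs j)" by (rule good_Un[OF XXL gB Bs(1)])
      then have "prob (B \<union> Bs j) \<le> s" unfolding s_def P_def
        by (intro cSup_upper) (use Pbdd[unfolded P_def] in auto)
      moreover have "prob (B \<union> Bs j) = prob B + prob (Bs j)"
        using B(1,2) by (intro finite_measure_Union) (auto simp: U_def)
      ultimately show ?thesis using Bs(2)[of j] by linarith
    qed
    obtain n :: nat where n: "0 < n" "inverse (real n) < prob B" using ex_inverse_of_nat_less B(3) by blast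
    have "prob B < 1 / real (Suc (n - 1))" by (rule small)
    with n show False by (simp add: inverse_eq_divide)
  qed
  then have "AE w in M. w \<notin> space M - U" by (subst prob_eq_0[symmetric]) auto
  then have "AE w in M. w \<in> U" using AE_space by eventually_elim auto
  then show ?thesis using Bs(1) unfolding U_def by blast
qed

end



theorem lemmaA3:
  fixes M :: "'a measure" and XX :: "('a \<Rightarrow> real) set"
  assumes "prob_space M"
    and "XX \<subseteq> L0plus M"
    and "\<forall>Y\<in>L0plus M. (\<forall>n. Y \<in> O_set M XX n) \<longleftrightarrow> (AE \<omega> in M. Y \<omega> = 0)"
  shows "\<exists>\<mu>0\<in>M0plus M. absolutely_continuous \<mu>0 M \<and> (\<forall>n. u_fun M XX n \<mu>0 \<le> 1)"
proof -
  interpret P: prob_space M by (rule assms(1))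
  have XXL: "XX \<subseteq> L0plus M" by (rule assms(2))
  from P.exhaustion[OF assms(2,3)] obtain Bs :: "nat \<Rightarrow> 'a set" where
    Bs0: "(\<forall>j. P.good XX (Bs j)) \<and> (AE w in M. w \<in> (\<Union>j. Bs j))" by (rule exE)
  then have Bs: "\<And>j. P.good XX (Bs j)" "AE w in M. w \<in> (\<Union>j. Bs j)" by auto
  have Bse[measurable]: "Bs j \<in> sets M" for j using Bs(1) unfolding P.good_def by auto
  have "\<forall>j. \<exists>K. \<forall>X\<in>XX. (\<integral>\<^sup>+w. ennreal (X w) * indicator (Bs j) w \<partial>M) \<le> ennreal K"
    using Bs(1) unfolding P.good_def by blast
  from choice[OF this] obtain K where K:
    "\<And>j X. X \<in> XX \<Longrightarrow> (\<integral>\<^sup>+w. ennreal (X w) * indicator (Bs j) w \<partial>M) \<le> ennreal (K j)" by blast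
  define Kp where "Kp j = max (K j) 0 + 1" for j
  have Kp1: "1 \<le> Kp j" for j unfolding Kp_def by simp
  define a where "a j = (1/2::real)^(Suc j) / Kp j" for j
  have a0: "0 < a j" for j unfolding a_def using Kp1[of j] by simp
  have aKp: "a j * Kp j = (1/2)^(Suc j)" for j unfolding a_def using Kp1[of j] by simp
  have ale: "a j \<le> (1/2)^(Suc j)" for j
  proof -
    have "(1/2::real)^(Suc j) / Kp j \<le> (1/2)^(Suc j) / 1"
      by (rule divide_left_mono) (use Kp1[of j] in auto)
    then show ?thesis unfolding a_def by simp
  qed
  have geo: "(\<Sum>j. ennreal ((1/2::real)^(Suc j))) = 1"
  proof -
    have s0: "summable (\<lambda>j. (1/2::real)^j)" by (rule summable_geometric) simp
    have e: "(\<lambda>j. (1/2::real)^(Suc j)) = (\<lambda>j. (1/2) * (1/2)^j)" by (simp only: power_Suc)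
    have s: "summable (\<lambda>j. (1/2::real)^(Suc j))" unfolding e by (rule summable_mult[OF s0])
    have g: "(\<Sum>j. (1/2::real)^j) = 2" using suminf_geometric[of "1/2::real"] by simp
    have "(\<Sum>j. (1/2::real)^(Suc j)) = 1/2 * 2" unfolding e suminf_mult[OF s0] g ..
    then have h: "(\<Sum>j. (1/2::real)^(Suc j)) = 1" by simp
    have "(\<Sum>j. ennreal ((1/2::real)^(Suc j))) = ennreal (\<Sum>j. (1/2::real)^(Suc j))"
      by (rule suminf_ennreal2[OF _ s]) simp
    then show ?thesis unfolding h by simp
  qed
  define f where "f w = (\<Sum>j. ennreal (a j) * indicator (Bs j) w)" for w
  have fm[measurable]: "f \<in> borel_measurable M" unfolding f_def by measurable
  have fle1: "f w \<le> 1" for w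
  proof -
    have "f w \<le> (\<Sum>j. ennreal ((1/2::real)^(Suc j)))" unfolding f_def
      by (intro suminf_le summableI) (use ale in \<open>auto split: split_indicator intro: ennreal_leI\<close>)
    then show ?thesis using geo by simp
  qed
  have fpos: "AE w in M. 0 < f w"
    using Bs(2)
  proof eventually_elim
    case (elim w)
    then obtain j where j: "w \<in> Bs j" by auto
    have "(\<Sum>i\<in>{j}. ennreal (a i) * indicator (Bs i) w) \<le> f w" unfolding f_def
      by (rule sum_le_suminf[OF summableI]) auto
    then have "ennreal (a j) * indicator (Bs j) w \<le> f w" by (metis add.right_neutral empty_iff finite.emptyI sum.empty sum.insert)
    moreover have "0 < ennreal (a j) * indicator (Bs j) w" using j a0[of j] by simp
    ultimately show ?case by simp
  qed
  have fX: "(\<integral>\<^sup>+w. f w * ennreal (X w) \<partial>M) \<le> 1" if X: "X \<in> XX" for X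
  proof -
    have Xm[measurable]: "X \<in> borel_measurable M" using X XXL unfolding L0plus_def by auto
    have "(\<integral>\<^sup>+w. f w * ennreal (X w) \<partial>M) = (\<integral>\<^sup>+w. (\<Sum>j. ennreal (a j) * (ennreal (X w) * indicator (Bs j) w)) \<partial>M)"
      unfolding f_def by (intro nn_integral_cong) (simp add: mult_ac)
    also have "\<dots> = (\<Sum>j. \<integral>\<^sup>+w. ennreal (a j) * (ennreal (X w) * indicator (Bs j) w) \<partial>M)"
      by (rule nn_integral_suminf) measurable
    also have "\<dots> = (\<Sum>j. ennreal (a j) * (\<integral>\<^sup>+w. ennreal (X w) * indicator (Bs j) w \<partial>M))"
      by (intro suminf_cong nn_integral_cmult) measurable
    also have "\<dots> \<le> (\<Sum>j. ennreal ((1/2::real)^(Suc j)))"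
    proof (intro suminf_le summableI)
      fix j
      have "ennreal (a j) * (\<integral>\<^sup>+w. ennreal (X w) * indicator (Bs j) w \<partial>M) \<le> ennreal (a j) * ennreal (K j)"
        using K[OF X, of j] by (rule mult_left_mono) simp
      also have "\<dots> \<le> ennreal (a j) * ennreal (Kp j)"
        by (intro mult_left_mono ennreal_leI) (auto simp: Kp_def)
      also have "\<dots> = ennreal ((1/2::real)^(Suc j))"
        using aKp[of j] a0[of j] Kp1[of j] by (simp add: ennreal_mult[symmetric])
      finally show "ennreal (a j) * (\<integral>\<^sup>+w. ennreal (X w) * indicator (Bs j) w \<partial>M) \<le> ennreal ((1/2::real)^(Suc j))" .
    qed
    finally show ?thesis using geo by simp
  qed
  define \<mu>0 where "\<mu>0 = density M f"
  have sets\<mu>: "sets \<mu>0 = sets M" unfolding \<mu>0_def by simp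
  have fin: "finite_measure \<mu>0"
  proof (rule finite_measureI)
    have "emeasure \<mu>0 (space \<mu>0) = (\<integral>\<^sup>+w. f w * indicator (space M) w \<partial>M)"
      unfolding \<mu>0_def by (simp add: emeasure_density)
    also have "\<dots> \<le> (\<integral>\<^sup>+w. 1 \<partial>M)"
      by (intro nn_integral_mono) (use fle1 in \<open>auto split: split_indicator\<close>)
    also have "\<dots> = 1" by (simp add: P.emeasure_space_1)
    finally show "emeasure \<mu>0 (space \<mu>0) \<noteq> \<infinity>" by (auto simp: top_unique)
  qed
  have sf: "sigma_finite_measure \<mu>0"
    using fin by (simp add: finite_measure_def)
  have ac1: "absolutely_continuous M \<mu>0" unfolding \<mu>0_def by (rule absolutely_continuousI_density) simp
  have ac2: "absolutely_continuous \<mu>0 M"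
    unfolding absolutely_continuous_def
  proof
    fix A assume "A \<in> null_sets \<mu>0"
    then have A: "A \<in> sets M" "AE x in M. x \<in> A \<longrightarrow> f x = 0"
      unfolding \<mu>0_def using null_sets_density_iff[OF fm] by auto
    have "AE x in M. x \<notin> A" using A(2) fpos by eventually_elim auto
    then show "A \<in> null_sets M" using AE_iff_null_sets[OF A(1)] by simp
  qed
  have u: "u_fun M XX n \<mu>0 \<le> 1" for n
    unfolding u_fun_def
  proof (rule SUP_least)
    fix Y assume Y: "Y \<in> O_set M XX n"
    have Ym[measurable]: "Y \<in> borel_measurable M" using Y by (rule O_set_meas)
    obtain Z where Z: "Z \<in> conv_shift XX n" "AE w in M. Y w \<le> Z w" using Y unfolding O_set_def by auto
    obtain k :: nat and c :: "nat \<Rightarrow> real" and Xs :: "nat \<Rightarrow> 'a \<Rightarrow> real" where cX: "\<forall>i<k. 0 \<le> c i \<and> Xs i \<in> XX" "(\<Sum>i<k. c i) = 1"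
      "\<forall>w\<in>space M. Z w \<le> (\<Sum>i<k. c i * Xs i w)"
      using conv_shift_bound[OF XXL Z(1)] by (elim exE conjE) (rule that)
    have Xsm[measurable]: "Xs i \<in> borel_measurable M" if "i < k" for i
      using cX(1) that XXL unfolding L0plus_def by auto
    have Xs0: "0 \<le> Xs i w" if "i < k" "w \<in> space M" for i w
      using cX(1) that XXL unfolding L0plus_def by auto
    have "(\<integral>\<^sup>+w. ennreal (Y w) \<partial>\<mu>0) = (\<integral>\<^sup>+w. f w * ennreal (Y w) \<partial>M)"
      unfolding \<mu>0_def by (rule nn_integral_density) measurable
    also have "\<dots> \<le> (\<integral>\<^sup>+w. (\<Sum>i<k. ennreal (c i) * (f w * ennreal (Xs i w))) \<partial>M)"
    proof (rule nn_integral_mono_AE)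
      show "AE w in M. f w * ennreal (Y w) \<le> (\<Sum>i<k. ennreal (c i) * (f w * ennreal (Xs i w)))"
        using Z(2) AE_space
      proof eventually_elim
        case (elim w)
        have "ennreal (Y w) \<le> ennreal (\<Sum>i<k. c i * Xs i w)"
          using elim cX(3) by (intro ennreal_leI) auto
        also have "\<dots> = (\<Sum>i<k. ennreal (c i * Xs i w))"
          using cX(1) Xs0 elim by (intro sum_ennreal[symmetric]) auto
        also have "\<dots> = (\<Sum>i<k. ennreal (c i) * ennreal (Xs i w))"
          using cX(1) Xs0 elim by (intro sum.cong refl ennreal_mult) auto
        finally have "f w * ennreal (Y w) \<le> f w * (\<Sum>i<k. ennreal (c i) * ennreal (Xs i w))"
          by (rule mult_left_mono) simp
        then show ?case by (simp add: sum_distrib_left mult_ac)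
      qed
    qed
    also have "\<dots> = (\<Sum>i<k. ennreal (c i) * (\<integral>\<^sup>+w. f w * ennreal (Xs i w) \<partial>M))"
      by (subst nn_integral_sum) (auto intro!: sum.cong nn_integral_cmult)
    also have "\<dots> \<le> (\<Sum>i<k. ennreal (c i) * 1)"
      using cX(1) fX by (intro sum_mono mult_left_mono) auto
    also have "\<dots> = 1" using cX(1,2) sum_ennreal[of "{..<k}" c] by simp
    finally show "(\<integral>\<^sup>+w. ennreal (Y w) \<partial>\<mu>0) \<le> 1" .
  qed
  have "\<mu>0 \<in> M0plus M" unfolding M0plus_def using sets\<mu> sf ac1 by auto
  then show ?thesis using ac2 u by blast
qed


end
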